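(* For $n\ge2$, the DFA $\mathcal W_n$ defined below is minimal, accepts a two-sided ideal, and its transition semigroup has size $n^{n-2}+(n-2)2^{n-2}+1$.
   Context: $Q_n=\{0,\dots,n-1\}$. Notation: $(p\to q)$ maps $p$ to $q$ and fixes other states; $(p_0,\dots,p_{k-1})$ is the cyclic permutation $p_0\mapsto\cdots\mapsto p_{k-1}\mapsto p_0$ fixing other states; $\mathbf 1$ is the identity; $(1\to2)(0\to1)$ is the map $0\mapsto1,1\mapsto2,2\mapsto2$. For $n\ge4$, $\mathcal W_n$ has states $Q_n$, initial $0$, final $\{n-1\}$, alphabet $\{a,b,c,d,e,f\}$, where $a\colon(1,2,\dots,n-2)$, $b\colon(1,2)$, $c\colon(n-2\to1)$, $d\colon(n-2\to0)$, $e$ maps each state of $\{0,\dots,n-2\}$ to $1$ and fixes $n-1$, and $f\colon(1\to n-1)$ (for $n=4$, $a$ and $b$ coincide). $\mathcal W_3$ has states $Q_3$, initial $0$, final $\{2\}$, alphabet $\{a,b,c\}$, $a\colon(1\to2)(0\to1)$, $b\colon(1\to0)$, $c\colon\mathbf 1$. $\mathcal W_2$ has states $Q_2$, initial $0$, final $\{1\}$, alphabet $\{a,b\}$, $a\colon(0\to1)$, $b\colon\mathbf 1$. A two-sided ideal is a nonempty $L$ with $L=\Sigma^*L\Sigma^*$. The transition semigroup is the set of state transformations induced by nonempty words. *)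

theory Defs
  imports Main
begin

definition words :: "'s set \<Rightarrow> 's list set" where
  "words S = lists S"

fun delta_star :: "('s \<Rightarrow> 'q \<Rightarrow> 'q) \<Rightarrow> 'q \<Rightarrow> 's list \<Rightarrow> 'q" where
  "delta_star delta q [] = q"
| "delta_star delta q (x # w) = delta_star delta (delta x q) w"

definition dfa_lang :: "'s set \<Rightarrow> ('s \<Rightarrow> 'q \<Rightarrow> 'q) \<Rightarrow> 'q \<Rightarrow> 'q set \<Rightarrow> 's list set" where
  "dfa_lang S delta q0 F = {w \<in> words S. delta_star delta q0 w \<in> F}"

definition dfa_minimal ::
  "'q set \<Rightarrow> 's set \<Rightarrow> ('s \<Rightarrow> 'q \<Rightarrow> 'q) \<Rightarrow> 'q \<Rightarrow> 'q set \<Rightarrow> bool" where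
  "dfa_minimal Q S delta q0 F \<longleftrightarrow>
     (\<forall>q\<in>Q. \<exists>w\<in>words S. delta_star delta q0 w = q) \<and>
     (\<forall>p\<in>Q. \<forall>q\<in>Q. p \<noteq> q \<longrightarrow>
        (\<exists>w\<in>words S. (delta_star delta p w \<in> F) \<noteq> (delta_star delta q w \<in> F)))"

definition two_sided_ideal :: "'s set \<Rightarrow> 's list set \<Rightarrow> bool" where
  "two_sided_ideal S L \<longleftrightarrow> L \<noteq> {} \<and> L \<subseteq> words S \<and>
     L = {u @ v @ x | u v x. u \<in> words S \<and> v \<in> L \<and> x \<in> words S}"

text \<open>The transition semigroup: transformations of Q induced by nonempty words.
  A transformation is represented by its restriction to Q.\<close>

definition trans_semigroup ::
  "'q set \<Rightarrow> 's set \<Rightarrow> ('s \<Rightarrow> 'q \<Rightarrow> 'q) \<Rightarrow> ('q \<Rightarrow> 'q option) set" where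
  "trans_semigroup Q S delta =
     {(\<lambda>q. if q \<in> Q then Some (delta_star delta q w) else None) | w. w \<in> words S \<and> w \<noteq> []}"

text \<open>The DFA W_n.  States {0..<n}, initial 0, final {n-1}.
  Letters are encoded as naturals: a=0, b=1, c=2, d=3, e=4, f=5.\<close>

definition W_states :: "nat \<Rightarrow> nat set" where
  "W_states n = {0..<n}"

definition W_alpha :: "nat \<Rightarrow> nat set" where
  "W_alpha n = (if n = 2 then {0,1} else if n = 3 then {0,1,2} else {0,1,2,3,4,5})"

definition W_delta :: "nat \<Rightarrow> nat \<Rightarrow> nat \<Rightarrow> nat" where
  "W_delta n x q =
    (if n = 2 then
       (if x = 0 then (if q = 0 then 1 else q) else q)
     else if n = 3 then
       (if x = 0 then (if q = 0 then 1 else if q = 1 then 2 else q)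
        else if x = 1 then (if q = 1 then 0 else q)
        else q)
     else
       (if x = 0 then (if 1 \<le> q \<and> q < n - 2 then q + 1 else if q = n - 2 then 1 else q)
        else if x = 1 then (if q = 1 then 2 else if q = 2 then 1 else q)
        else if x = 2 then (if q = n - 2 then 1 else q)
        else if x = 3 then (if q = n - 2 then 0 else q)
        else if x = 4 then (if q \<le> n - 2 then 1 else q)
        else (if q = 1 then n - 1 else q)))"

end

theory Submission
  imports Defs
begin



lemma ds_append: "delta_star d q (u @ v) = delta_star d (delta_star d q u) v"
  by (induction u arbitrary: q) auto

lemma W_lt: "2 \<le> n \<Longrightarrow> q < n \<Longrightarrow> W_delta n x q < n"
  unfolding W_delta_def by auto

lemma ds_lt: "2 \<le> n \<Longrightarrow> q < n \<Longrightarrow> delta_star (W_delta n) q w < n"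
  by (induction w arbitrary: q) (auto simp: W_lt)

lemma W4: "4 \<le> n \<Longrightarrow> W_delta n x q =
       (if x = 0 then (if 1 \<le> q \<and> q < n - 2 then q + 1 else if q = n - 2 then 1 else q)
        else if x = 1 then (if q = 1 then 2 else if q = 2 then 1 else q)
        else if x = 2 then (if q = n - 2 then 1 else q)
        else if x = 3 then (if q = n - 2 then 0 else q)
        else if x = 4 then (if q \<le> n - 2 then 1 else q)
        else (if q = 1 then n - 1 else q))"
  unfolding W_delta_def by auto

definition realized :: "nat \<Rightarrow> (nat \<Rightarrow> nat) \<Rightarrow> bool" where
  "realized n g \<longleftrightarrow> (\<exists>w\<in>lists (W_alpha n). \<forall>q<n. delta_star (W_delta n) q w = g q)"

lemma realized_id: "realized n id"
  unfolding realized_def by (rule bexI[of _ "[]"]) auto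

lemma realized_cong: "realized n g \<Longrightarrow> (\<And>q. q < n \<Longrightarrow> g q = h q) \<Longrightarrow> realized n h"
  unfolding realized_def by auto

lemma realized_comp: assumes "2 \<le> n" "realized n g1" "realized n g2"
  shows "realized n (g2 \<circ> g1)"
proof -
  obtain w1 where w1: "w1 \<in> lists (W_alpha n)" "\<forall>q<n. delta_star (W_delta n) q w1 = g1 q"
    using assms(2) unfolding realized_def by blast
  obtain w2 where w2: "w2 \<in> lists (W_alpha n)" "\<forall>q<n. delta_star (W_delta n) q w2 = g2 q"
    using assms(3) unfolding realized_def by blast
  show ?thesis unfolding realized_def
  proof (rule bexI[of _ "w1 @ w2"])
    show "w1 @ w2 \<in> lists (W_alpha n)" using w1 w2 by auto
    show "\<forall>q<n. delta_star (W_delta n) q (w1 @ w2) = (g2 \<circ> g1) q"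
    proof (intro allI impI)
      fix q assume q: "q < n"
      have "delta_star (W_delta n) q w1 < n" using ds_lt[OF assms(1) q] .
      then show "delta_star (W_delta n) q (w1 @ w2) = (g2 \<circ> g1) q"
        using w1 w2 q by (simp add: ds_append)
    qed
  qed
qed

lemma realized_letter: "x \<in> W_alpha n \<Longrightarrow> (\<And>q. q < n \<Longrightarrow> W_delta n x q = g q) \<Longrightarrow> realized n g"
  unfolding realized_def by (rule bexI[of _ "[x]"]) auto

definition sw :: "nat \<Rightarrow> nat \<Rightarrow> nat \<Rightarrow> nat" where
  "sw a b q = (if q = a then b else if q = b then a else q)"

definition rot :: "nat \<Rightarrow> nat \<Rightarrow> nat \<Rightarrow> nat" where
  "rot n k q = (if 1 \<le> q \<and> q \<le> n - 2 then (q - 1 + k) mod (n - 2) + 1 else q)"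

lemma alpha4: "4 \<le> n \<Longrightarrow> W_alpha n = {0,1,2,3,4,5}"
  unfolding W_alpha_def by auto

lemma real_a: "4 \<le> n \<Longrightarrow> realized n (rot n 1)"
  apply (rule realized_letter[of 0])
   apply (simp add: alpha4)
  apply (simp add: W4 rot_def)
  apply (auto simp: mod_Suc)
  done





lemma rot_in: "4 \<le> n \<Longrightarrow> q = Suc p \<Longrightarrow> p < n - 2 \<Longrightarrow> rot n k q = Suc ((p + k) mod (n - 2))"
  unfolding rot_def by auto

lemma rot_out: "\<not> (1 \<le> q \<and> q \<le> n - 2) \<Longrightarrow> rot n k q = q"
  unfolding rot_def by auto

lemma rot_rot: assumes "4 \<le> n" shows "rot n a (rot n b q) = rot n (a + b) q"
proof (cases "1 \<le> q \<and> q \<le> n - 2")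
  case True
  then obtain p where p: "q = Suc p" "p < n - 2" by (cases q) auto
  have "(p + b) mod (n - 2) < n - 2" using assms by simp
  then have "rot n a (rot n b q) = Suc (((p + b) mod (n - 2) + a) mod (n - 2))"
    using rot_in[OF assms p] rot_in[OF assms refl] by simp
  also have "\<dots> = Suc ((p + (a + b)) mod (n - 2))"
    by (simp only: mod_add_left_eq) (simp add: ac_simps)
  finally show ?thesis using rot_in[OF assms p] by simp
qed (simp add: rot_out)


lemma rot_m: assumes "4 \<le> n" shows "rot n (n - 2) q = q"
proof (cases "1 \<le> q \<and> q \<le> n - 2")
  case True
  then obtain p where p: "q = Suc p" "p < n - 2" by (cases q) auto
  have e: "(p + (n - 2)) mod (n - 2) = p" using p(2) by (metis mod_add_self2 mod_less)
  show ?thesis by (subst rot_in[OF assms p]) (simp only: e p(1))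
qed (simp add: rot_out)

lemma rot_lt: assumes "4 \<le> n" "q < n" shows "rot n k q < n"
proof (cases "1 \<le> q \<and> q \<le> n - 2")
  case True
  then obtain p where p: "q = Suc p" "p < n - 2" by (cases q) auto
  have "(p + k) mod (n - 2) < n - 2" using assms by simp
  then show ?thesis using rot_in[OF assms(1) p] by simp
qed (simp add: rot_out assms)

lemma realized_rot: "4 \<le> n \<Longrightarrow> realized n (rot n k)"
proof (induction k)
  case 0
  show ?case by (rule realized_cong[OF realized_id]) (auto simp: rot_def)
next
  case (Suc k)
  have "realized n (rot n 1 \<circ> rot n k)"
    using Suc realized_comp real_a by simp
  then show ?case
    by (rule realized_cong) (simp add: rot_rot[OF Suc.prems])
qed

lemma conj_sw:
  assumes "\<forall>q<n. P (P' q) = q \<and> P' (P q) = q \<and> P q < n \<and> P' q < n" "x<n" "y<n" "q<n"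
  shows "P (sw x y (P' q)) = sw (P x) (P y) q"
proof -
  have a: "P (P' q) = q" "P' q < n" using assms by auto
  have b: "P' (P x) = x" "P' (P y) = y" using assms by auto
  show ?thesis unfolding sw_def using a b by (auto simp: assms)
qed

lemma conj_upd:
  assumes "\<forall>q<n. P (P' q) = q \<and> P' (P q) = q \<and> P q < n \<and> P' q < n" "i<n" "q<n"
  shows "P ((id(i := y)) (P' q)) = (id(P i := P y)) q"
proof -
  have a: "P (P' q) = q" "P' q < n" using assms by auto
  have b: "P' (P i) = i" using assms by auto
  show ?thesis using a b by (auto simp: assms)
qed

lemma realized_conj:
  assumes "2 \<le> n" "realized n P" "realized n P'" "realized n g"
    "\<And>q. q < n \<Longrightarrow> P (g (P' q)) = h q"
  shows "realized n h"
proof -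
  have "realized n (P \<circ> (g \<circ> P'))"
    using assms(1-4) realized_comp by blast
  then show ?thesis by (rule realized_cong) (simp add: assms(5))
qed


lemma real_b: "4 \<le> n \<Longrightarrow> realized n (sw 1 2)"
  by (rule realized_letter[of 1]) (auto simp: alpha4 W4 sw_def)

lemma rot_inv: assumes "4 \<le> n" "a + b = n - 2"
  shows "\<forall>q<n. rot n a (rot n b q) = q \<and> rot n b (rot n a q) = q \<and> rot n a q < n \<and> rot n b q < n"
  using assms rot_rot[OF assms(1)] rot_m[OF assms(1)] rot_lt[OF assms(1)] by (simp add: add.commute)

lemma realized_adj: assumes "4 \<le> n" "1 \<le> k" "k + 1 \<le> n - 2"
  shows "realized n (sw k (k + 1))"
proof -
  have inv: "\<forall>q<n. rot n (k - 1) (rot n (n - 2 - (k - 1)) q) = q \<and> rot n (n - 2 - (k - 1)) (rot n (k - 1) q) = q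
     \<and> rot n (k - 1) q < n \<and> rot n (n - 2 - (k - 1)) q < n"
    by (rule rot_inv) (use assms in auto)
  have r1: "rot n (k - 1) 1 = k" using rot_in[OF assms(1), of 1 0] assms by simp
  have r2: "rot n (k - 1) 2 = k + 1" using rot_in[OF assms(1), of 2 1] assms by simp
  show ?thesis
  proof (rule realized_conj[OF _ realized_rot realized_rot real_b])
    fix q assume "q < n"
    then show "rot n (k - 1) (sw 1 2 (rot n (n - 2 - (k - 1)) q)) = sw k (k + 1) q"
      using conj_sw[OF inv, of 1 2 q] r1 r2 assms by simp
  qed (use assms in auto)
qed

lemma sw_inv: "x < n \<Longrightarrow> y < n \<Longrightarrow> \<forall>q<n. sw x y (sw x y q) = q \<and> sw x y (sw x y q) = q \<and> sw x y q < n \<and> sw x y q < n"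
  unfolding sw_def by auto

lemma realized_sw_lt0: assumes "4 \<le> n" "1 \<le> i" 
  shows "Suc i + d \<le> n - 2 \<Longrightarrow> realized n (sw i (Suc i + d))"
proof (induction d)
  case 0
  then show ?case using assms realized_adj[of n i] by simp
next
  case (Suc d)
  define j where "j = Suc i + d"
  have inv: "\<forall>q<n. sw j (j+1) (sw j (j+1) q) = q \<and> sw j (j+1) (sw j (j+1) q) = q \<and> sw j (j+1) q < n \<and> sw j (j+1) q < n"
    by (rule sw_inv) (use Suc in \<open>auto simp: j_def\<close>)
  have rj: "realized n (sw j (j + 1))" using realized_adj[of n j] Suc assms by (simp add: j_def)
  show ?case
  proof (rule realized_conj[OF _ rj rj])
    show "realized n (sw i j)" using Suc by (simp add: j_def)
    fix q assume "q < n"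
    then show "sw j (j + 1) (sw i j (sw j (j + 1) q)) = sw i (Suc i + Suc d) q"
      using conj_sw[OF inv, of i j q] Suc assms by (simp add: sw_def j_def)
  qed (use assms in auto)
qed

lemma realized_sw_lt: assumes "4 \<le> n" "1 \<le> i" "i < j" "j \<le> n - 2"
  shows "realized n (sw i j)"
proof -
  obtain d where "j = Suc i + d" using assms(3) by (metis add_Suc less_iff_Suc_add)
  then show ?thesis using realized_sw_lt0[OF assms(1,2), of d] assms by simp
qed

lemma realized_sw: assumes "4 \<le> n" "1 \<le> i" "i \<le> n - 2" "1 \<le> j" "j \<le> n - 2"
  shows "realized n (sw i j)"
proof -
  consider "i < j" | "i = j" | "j < i" by arith
  then show ?thesis
  proof cases
    case 1 then show ?thesis using realized_sw_lt assms by blast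
  next
    case 2 then show ?thesis by (intro realized_cong[OF realized_id]) (auto simp: sw_def)
  next
    case 3
    have "realized n (sw j i)" using realized_sw_lt 3 assms by blast
    then show ?thesis by (rule realized_cong) (auto simp: sw_def)
  qed
qed


lemma realized_upd_conj:
  assumes "4 \<le> n" "1 \<le> a" "a \<le> n - 2" "1 \<le> b" "b \<le> n - 2" "i < n"
    "realized n (id(i := y))"
  shows "realized n (id(sw a b i := sw a b y))"
proof -
  have inv: "\<forall>q<n. sw a b (sw a b q) = q \<and> sw a b (sw a b q) = q \<and> sw a b q < n \<and> sw a b q < n"
    by (rule sw_inv) (use assms in auto)
  have r: "realized n (sw a b)" using realized_sw assms by blast
  show ?thesis
  proof (rule realized_conj[OF _ r r assms(7)])
    fix q assume "q < n"
    then show "sw a b ((id(i := y)) (sw a b q)) = (id(sw a b i := sw a b y)) q"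
      using conj_upd[OF inv assms(6)] by blast
  qed (use assms in auto)
qed

lemma realized_upd0: assumes "4 \<le> n" "1 \<le> i" "i \<le> n - 2"
  shows "realized n (id(i := 0))"
proof -
  have d: "realized n (id(n - 2 := 0))"
    by (rule realized_letter[of 3]) (use assms in \<open>auto simp: alpha4 W4\<close>)
  show ?thesis
  proof (cases "i = n - 2")
    case True then show ?thesis using d by simp
  next
    case False
    have "realized n (id(sw i (n-2) (n-2) := sw i (n-2) 0))"
      by (rule realized_upd_conj[OF assms(1,2,3) _ _ _ d]) (use assms in auto)
    then show ?thesis using assms False by (simp add: sw_def)
  qed
qed

lemma realized_updF: assumes "4 \<le> n" "1 \<le> i" "i \<le> n - 2"
  shows "realized n (id(i := n - 1))"
proof -
  have f: "realized n (id(1 := n - 1))"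
    by (rule realized_letter[of 5]) (use assms in \<open>auto simp: alpha4 W4\<close>)
  show ?thesis
  proof (cases "i = 1")
    case True then show ?thesis using f by simp
  next
    case False
    have "realized n (id(sw i 1 1 := sw i 1 (n - 1)))"
      by (rule realized_upd_conj[OF assms(1,2,3) _ _ _ f]) (use assms in auto)
    moreover have "sw i 1 1 = i" "sw i 1 (n - 1) = n - 1" using assms False by (auto simp: sw_def)
    ultimately show ?thesis by simp
  qed
qed

lemma realized_upd1: assumes "4 \<le> n" "1 \<le> i" "i \<le> n - 2"
  shows "realized n (id(i := 1))"
proof -
  have c: "realized n (id(n - 2 := 1))"
    by (rule realized_letter[of 2]) (use assms in \<open>auto simp: alpha4 W4\<close>)
  show ?thesis
  proof (cases "i = n - 2 \<or> i = 1")
    case True then show ?thesis using c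
      by (auto intro: realized_cong[OF realized_id])
  next
    case False
    have "realized n (id(sw i (n-2) (n-2) := sw i (n-2) 1))"
      by (rule realized_upd_conj[OF assms(1,2,3) _ _ _ c]) (use assms in auto)
    then show ?thesis using assms False by (simp add: sw_def)
  qed
qed

lemma realized_updM: assumes "4 \<le> n" "1 \<le> i" "i \<le> n - 2" "1 \<le> y" "y \<le> n - 2"
  shows "realized n (id(i := y))"
proof (cases "y = 1")
  case True then show ?thesis using realized_upd1 assms by simp
next
  case False
  note F = False
  show ?thesis
  proof (cases "i = y")
    case True then show ?thesis by (auto intro: realized_cong[OF realized_id])
  next
    case False
    define i' where "i' = sw 1 y i"
    have i': "1 \<le> i'" "i' \<le> n - 2" using assms unfolding i'_def sw_def by auto
    have "realized n (id(sw 1 y i' := sw 1 y 1))"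
      by (rule realized_upd_conj[OF assms(1) _ _ assms(4,5) _ realized_upd1[OF assms(1) i']]) (use assms i' in auto)
    moreover have "sw 1 y i' = i" "sw 1 y 1 = y" unfolding i'_def sw_def using False F by auto
    ultimately show ?thesis by simp
  qed
qed

lemma realized_upd: assumes "4 \<le> n" "1 \<le> i" "i \<le> n - 2" "y < n"
  shows "realized n (id(i := y))"
proof -
  have "y = 0 \<or> y = n - 1 \<or> (1 \<le> y \<and> y \<le> n - 2)" using assms by arith
  then show ?thesis using realized_upd0 realized_updF realized_updM assms by blast
qed




lemma realized_multi: assumes "4 \<le> n" "finite D" "D \<subseteq> {1..n-2}"
  "\<forall>i\<in>D. x i < n \<and> x i \<notin> D"
  shows "realized n (\<lambda>q. if q \<in> D then x q else q)"
  using assms(2,3,4)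
proof (induction D rule: finite_induct)
  case empty
  then show ?case by (auto intro: realized_cong[OF realized_id])
next
  case (insert i D)
  have r1: "realized n (\<lambda>q. if q \<in> D then x q else q)" using insert by auto
  have r2: "realized n (id(i := x i))" using realized_upd[OF assms(1)] insert by auto
  have "realized n (id(i := x i) \<circ> (\<lambda>q. if q \<in> D then x q else q))"
    using realized_comp r1 r2 assms(1) by auto
  then show ?case
    by (rule realized_cong) (use insert in auto)
qed

definition permM :: "nat \<Rightarrow> (nat \<Rightarrow> nat) \<Rightarrow> bool" where
  "permM n g \<longleftrightarrow> (\<forall>q<n. q \<notin> {1..n-2} \<longrightarrow> g q = q) \<and> g ` {1..n-2} \<subseteq> {1..n-2}
      \<and> inj_on g {1..n-2}"

lemma realized_inj: assumes "4 \<le> n" "finite R" "R \<subseteq> {1..n-2}" "inj_on phi R" "phi ` R \<subseteq> {1..n-2}"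
  shows "\<exists>g. realized n g \<and> permM n g \<and> (\<forall>r\<in>R. g r = phi r)"
  using assms(2-5)
proof (induction R rule: finite_induct)
  case empty
  then show ?case by (intro exI[of _ id]) (auto simp: realized_id permM_def id_def[symmetric])
next
  case (insert r R)
  then obtain g where g: "realized n g" "permM n g" "\<forall>x\<in>R. g x = phi x" by auto
  define y where "y = g r"
  define z where "z = phi r"
  have rM: "r \<in> {1..n-2}" using insert by auto
  have yM: "y \<in> {1..n-2}" using g(2) rM unfolding permM_def y_def by blast
  have zM: "z \<in> {1..n-2}" using insert unfolding z_def by auto
  have rs: "realized n (sw y z)" using realized_sw[OF assms(1)] yM zM by auto
  have rg: "realized n (sw y z \<circ> g)" using realized_comp rs g(1) assms(1) by auto
  have pm: "permM n (sw y z \<circ> g)"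
  proof -
    have "inj_on (sw y z) {1..n-2}" unfolding inj_on_def sw_def by auto
    moreover have "sw y z ` {1..n-2} \<subseteq> {1..n-2}" using yM zM unfolding sw_def by auto
    ultimately show ?thesis using g(2) yM zM unfolding permM_def
      by (auto simp: sw_def intro: comp_inj_on inj_on_subset)
  qed
  have ag: "\<forall>x\<in>insert r R. (sw y z \<circ> g) x = phi x"
  proof
    fix x assume x: "x \<in> insert r R"
    show "(sw y z \<circ> g) x = phi x"
    proof (cases "x = r")
      case True then show ?thesis by (simp add: y_def z_def sw_def)
    next
      case False
      then have xR: "x \<in> R" using x by auto
      have "phi x \<noteq> z" using inj_onD[OF insert.prems(2), of x r] xR False unfolding z_def by auto
      moreover have "g x \<noteq> y"
      proof
        assume "g x = y"
        moreover have "x \<in> {1..n-2}" using xR insert.prems(1) by auto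
        moreover have "inj_on g {1..n-2}" using g(2) unfolding permM_def by blast
        ultimately show False using inj_onD[of g "{1..n-2}" x r] rM False unfolding y_def by blast
      qed
      ultimately show ?thesis using g(3) xR by (auto simp: sw_def)
    qed
  qed
  show ?case using rg pm ag by blast
qed


lemma realized_typeA: assumes n4: "4 \<le> n" and t0: "t 0 = 0" and tn: "t (n - 1) = n - 1"
  and tlt: "\<forall>q<n. t q < n"
  shows "realized n t"
proof -
  define M where "M = {1..n-2}"
  define rep where "rep i = (LEAST j. j \<in> M \<and> t j = t i)" for i
  have rep1: "rep i \<in> M \<and> t (rep i) = t i" if "i \<in> M" for i
    unfolding rep_def by (rule LeastI[of _ i]) (use that in auto)
  have rep2: "rep (rep i) = rep i" if "i \<in> M" for i
    using rep1[OF that] unfolding rep_def by simp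
  have rep3: "rep i = rep i'" if "t i = t i'" for i i'
    unfolding rep_def using that by simp
  define x where "x i = (if t i \<in> M then rep i else t i)" for i
  define D where "D = {i \<in> M. x i \<noteq> i}"
  define R where "R = {i \<in> M. t i \<in> M \<and> rep i = i}"
  have Mlt: "q \<in> M \<Longrightarrow> q < n" for q unfolding M_def using n4 by auto
  have g1: "realized n (\<lambda>q. if q \<in> D then x q else q)"
  proof (rule realized_multi[OF n4])
    show "finite D" unfolding D_def M_def by auto
    show "D \<subseteq> {1..n-2}" unfolding D_def M_def by auto
    show "\<forall>i\<in>D. x i < n \<and> x i \<notin> D"
    proof
      fix i assume iD: "i \<in> D"
      then have iM: "i \<in> M" unfolding D_def by auto
      show "x i < n \<and> x i \<notin> D"
      proof (cases "t i \<in> M")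
        case True
        have "x i = rep i" using True by (simp add: x_def)
        moreover have "rep i \<in> M" "t (rep i) = t i" using rep1[OF iM] by auto
        moreover have "x (rep i) = rep i" using rep2[OF iM] True rep1[OF iM] by (simp add: x_def)
        ultimately show ?thesis using Mlt unfolding D_def by auto
      next
        case False
        then show ?thesis using tlt Mlt iM unfolding x_def D_def by auto
      qed
    qed
  qed
  obtain g2 where g2: "realized n g2" "permM n g2" "\<forall>r\<in>R. g2 r = t r"
  proof -
    have "\<exists>g. realized n g \<and> permM n g \<and> (\<forall>r\<in>R. g r = t r)"
    proof (rule realized_inj[OF n4])
      show "finite R" unfolding R_def M_def by auto
      show "R \<subseteq> {1..n-2}" unfolding R_def M_def by auto
      show "t ` R \<subseteq> {1..n-2}" unfolding R_def M_def by auto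
      show "inj_on t R"
      proof (rule inj_onI)
        fix i i' assume "i \<in> R" "i' \<in> R" "t i = t i'"
        then show "i = i'" using rep3[of i i'] unfolding R_def by auto
      qed
    qed
    then show ?thesis using that by blast
  qed
  have "realized n (g2 \<circ> (\<lambda>q. if q \<in> D then x q else q))"
    using realized_comp g1 g2(1) n4 by auto
  then show ?thesis
  proof (rule realized_cong)
    fix q assume q: "q < n"
    show "(g2 \<circ> (\<lambda>q. if q \<in> D then x q else q)) q = t q"
    proof (cases "q \<in> M")
      case False
      then have "q = 0 \<or> q = n - 1" using q unfolding M_def by auto
      moreover have "q \<notin> D" using False unfolding D_def by auto
      moreover have "g2 q = q" using g2(2) False q unfolding permM_def M_def by auto
      ultimately show ?thesis using t0 tn by auto
    next
      case True
      show ?thesis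
      proof (cases "t q \<in> M")
        case tM: True
        have a: "(if q \<in> D then x q else q) = rep q"
          using True tM unfolding D_def x_def by auto
        have "rep q \<in> R" using rep1[OF True] rep2[OF True] tM unfolding R_def by auto
        then have "g2 (rep q) = t (rep q)" using g2(3) by auto
        then show ?thesis using a rep1[OF True] by simp
      next
        case tM: False
        have a: "(if q \<in> D then x q else q) = t q"
          using True tM unfolding D_def x_def by auto
        have "g2 (t q) = t q" using g2(2) tM tlt q unfolding permM_def M_def by auto
        then show ?thesis using a by simp
      qed
    qed
  qed
qed


definition TA :: "nat \<Rightarrow> (nat \<Rightarrow> nat) \<Rightarrow> bool" where
  "TA n g \<longleftrightarrow> g 0 = 0 \<and> g (n - 1) = n - 1 \<and> (\<forall>q<n. g q < n)"
definition TB :: "nat \<Rightarrow> (nat \<Rightarrow> nat) \<Rightarrow> bool" where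
  "TB n g \<longleftrightarrow> (\<exists>j. 1 \<le> j \<and> j \<le> n - 2 \<and> g 0 = j \<and> g (n - 1) = n - 1 \<and> (\<forall>q<n-1. g q = j \<or> g q = n - 1))"
definition TC :: "nat \<Rightarrow> (nat \<Rightarrow> nat) \<Rightarrow> bool" where
  "TC n g \<longleftrightarrow> (\<forall>q<n. g q = n - 1)"
definition TT :: "nat \<Rightarrow> (nat \<Rightarrow> nat) \<Rightarrow> bool" where
  "TT n g \<longleftrightarrow> TA n g \<or> TB n g \<or> TC n g"

lemma realized_typeB: assumes n4: "4 \<le> n" and "TB n t" shows "realized n t"
proof -
  obtain j where j: "1 \<le> j" "j \<le> n - 2" "t 0 = j" "t (n - 1) = n - 1" "\<forall>q<n-1. t q = j \<or> t q = n - 1"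
    using assms(2) unfolding TB_def by blast
  define h where "h q = (if 1 \<le> q \<and> q \<le> n - 2 \<and> t q = n - 1 then n - 1 else q)" for q
  have rh: "realized n h" by (rule realized_typeA[OF n4]) (use n4 in \<open>auto simp: h_def\<close>)
  have re: "realized n (\<lambda>q. if q \<le> n - 2 then 1 else q)"
    by (rule realized_letter[of 4]) (use n4 in \<open>auto simp: alpha4 W4\<close>)
  have "realized n (rot n (j - 1) \<circ> ((\<lambda>q. if q \<le> n - 2 then 1 else q) \<circ> h))"
    using realized_comp rh re realized_rot[OF n4] n4 by auto
  then show ?thesis
  proof (rule realized_cong)
    fix q assume q: "q < n"
    have r1: "rot n (j - 1) 1 = j" using rot_in[OF n4, of 1 0] j n4 by simp
    have rn: "rot n (j - 1) (n - 1) = n - 1" by (rule rot_out) (use n4 in arith)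
    show "(rot n (j - 1) \<circ> ((\<lambda>q. if q \<le> n - 2 then 1 else q) \<circ> h)) q = t q"
    proof (cases "q = n - 1")
      case True
      have "\<not> (n - 1 \<le> n - 2)" using n4 by arith
      then show ?thesis using True j rn n4 by (simp add: h_def)
    next
      case False
      then have q1: "q < n - 1" using q by auto
      show ?thesis
      proof (cases "t q = n - 1")
        case True
        have "q \<noteq> 0"
        proof
          assume "q = 0"
          then have "t q = j" using j by simp
          moreover have "j \<noteq> n - 1" using j n4 by arith
          ultimately show False using True by simp
        qed
        have qM: "1 \<le> q \<and> q \<le> n - 2" using q1 \<open>q \<noteq> 0\<close> by arith
        have hq: "h q = n - 1" using qM True by (simp add: h_def)
        have "\<not> (n - 1 \<le> n - 2)" using n4 by arith
        then show ?thesis using hq rn True by simp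
      next
        case False
        then have tqj: "t q = j" using j(5) q1 by auto
        have qq: "q \<le> n - 2" using q1 by arith
        then show ?thesis using tqj False q1 r1 by (simp add: h_def)
      qed
    qed
  qed
qed

lemma realized_typeC: assumes n4: "4 \<le> n" and "TC n t" shows "realized n t"
proof -
  have re: "realized n (\<lambda>q. if q \<le> n - 2 then 1 else q)"
    by (rule realized_letter[of 4]) (use n4 in \<open>auto simp: alpha4 W4\<close>)
  have rf: "realized n (id(1 := n - 1))"
    by (rule realized_letter[of 5]) (use n4 in \<open>auto simp: alpha4 W4\<close>)
  have "realized n (id(1 := n - 1) \<circ> (\<lambda>q. if q \<le> n - 2 then 1 else q))"
    using realized_comp re rf n4 by auto
  then show ?thesis
    by (rule realized_cong) (use assms(2) n4 in \<open>auto simp: TC_def\<close>)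
qed

lemma realized_TT: "4 \<le> n \<Longrightarrow> TT n t \<Longrightarrow> realized n t"
  unfolding TT_def using realized_typeA realized_typeB realized_typeC unfolding TA_def by blast

lemma realized_ne: assumes "4 \<le> n" "realized n g"
  shows "\<exists>w\<in>lists (W_alpha n). w \<noteq> [] \<and> (\<forall>q<n. delta_star (W_delta n) q w = g q)"
proof -
  obtain w where w: "w \<in> lists (W_alpha n)" "\<forall>q<n. delta_star (W_delta n) q w = g q"
    using assms(2) unfolding realized_def by blast
  show ?thesis
  proof (cases "w = []")
    case False then show ?thesis using w by blast
  next
    case True
    show ?thesis
      by (rule bexI[of _ "[1,1]"]) (use w True assms(1) in \<open>auto simp: alpha4 W4\<close>)
  qed
qed




lemma letter_props: assumes "2 \<le> n" "x \<in> W_alpha n"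
  shows "W_delta n x 0 = 0 \<or> (W_delta n x 0 = 1 \<and> (\<forall>q<n-1. W_delta n x q = 1 \<or> W_delta n x q = n - 1))"
    "W_delta n x (n - 1) = n - 1"
  using assms unfolding W_alpha_def W_delta_def by (auto split: if_splits)

lemma TT_const: assumes "2 \<le> n" "h 0 = v" "v < n" "h (n - 1) = n - 1" "\<forall>q<n-1. h q = v \<or> h q = n - 1"
  shows "TT n h"
proof -
  consider "v = 0" | "v = n - 1" | "1 \<le> v \<and> v \<le> n - 2" using assms(3) by arith
  then show ?thesis
  proof cases
    case 1
    have "\<forall>q<n. h q < n"
    proof (intro allI impI)
      fix q assume "q < n"
      then have "q < n - 1 \<or> q = n - 1" by arith
      then show "h q < n" using assms 1 by auto
    qed
    then show ?thesis using assms 1 unfolding TT_def TA_def by auto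
  next
    case 2
    have "\<forall>q<n. h q = n - 1"
    proof (intro allI impI)
      fix q assume "q < n"
      then have "q < n - 1 \<or> q = n - 1" by arith
      then show "h q = n - 1" using assms 2 by auto
    qed
    then show ?thesis unfolding TT_def TC_def by auto
  next
    case 3
    then show ?thesis using assms unfolding TT_def TB_def by auto
  qed
qed

lemma TT_props: assumes "2 \<le> n" "TT n g"
  shows "g (n - 1) = n - 1" "\<And>q. q < n \<Longrightarrow> g q < n"
proof -
  show "g (n - 1) = n - 1" using assms unfolding TT_def TA_def TB_def TC_def by auto
  fix q assume q: "q < n"
  show "g q < n"
    using assms(2) unfolding TT_def
  proof (elim disjE)
    assume "TB n g"
    then obtain j where j: "1 \<le> j" "j \<le> n - 2" "g (n - 1) = n - 1" "\<forall>q<n-1. g q = j \<or> g q = n - 1"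
      unfolding TB_def by blast
    have "q < n - 1 \<or> q = n - 1" using q by arith
    moreover have "j < n" using j by arith
    ultimately show ?thesis using j q by auto
  qed (use q in \<open>auto simp: TA_def TC_def\<close>)
qed

lemma TT_step: assumes n2: "2 \<le> n" and x: "x \<in> W_alpha n" and g: "TT n g"
  shows "TT n (g \<circ> W_delta n x)"
proof -
  let ?d = "W_delta n x"
  have dn: "?d (n - 1) = n - 1" using letter_props[OF n2 x] by simp
  have dlt: "\<And>q. q < n \<Longrightarrow> ?d q < n" using W_lt n2 by blast
  have gn: "g (n - 1) = n - 1" using TT_props[OF n2 g] by blast
  have glt: "\<And>q. q < n \<Longrightarrow> g q < n" using TT_props[OF n2 g] by blast
  consider "?d 0 = 0" | "?d 0 = 1" "\<forall>q<n-1. ?d q = 1 \<or> ?d q = n - 1" using letter_props(1)[OF n2 x] by fast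
  then show ?thesis
  proof cases
    case 1
    show ?thesis using g unfolding TT_def[of n g]
    proof (elim disjE)
      assume "TA n g"
      then show ?thesis unfolding TA_def TT_def using 1 dn dlt by auto
    next
      assume "TB n g"
      then obtain j where j: "1 \<le> j" "j \<le> n - 2" "g 0 = j" "g (n - 1) = n - 1" "\<forall>q<n-1. g q = j \<or> g q = n - 1"
        unfolding TB_def by blast
      have "\<forall>q<n-1. g (?d q) = j \<or> g (?d q) = n - 1"
      proof (intro allI impI)
        fix q assume "q < n - 1"
        then have "?d q < n" using dlt by auto
        then have "?d q < n - 1 \<or> ?d q = n - 1" by arith
        then show "g (?d q) = j \<or> g (?d q) = n - 1" using j by auto
      qed
      then show ?thesis unfolding TT_def TB_def using j 1 dn by auto
    next
      assume "TC n g"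
      then show ?thesis unfolding TT_def TC_def using dlt by auto
    qed
  next
    case 2
    show ?thesis
    proof (rule TT_const[OF n2, of _ "g 1"])
      show "(g \<circ> ?d) 0 = g 1" using 2 by simp
      show "g 1 < n" using glt n2 by auto
      show "(g \<circ> ?d) (n - 1) = n - 1" using dn gn by simp
      show "\<forall>q<n - 1. (g \<circ> ?d) q = g 1 \<or> (g \<circ> ?d) q = n - 1" using 2 gn by auto
    qed
  qed
qed

lemma TT_words: assumes "2 \<le> n" shows "w \<in> lists (W_alpha n) \<Longrightarrow> TT n (\<lambda>q. delta_star (W_delta n) q w)"
proof (induction w)
  case Nil
  then show ?case using assms unfolding TT_def TA_def by auto
next
  case (Cons x w)
  have "TT n ((\<lambda>q. delta_star (W_delta n) q w) \<circ> W_delta n x)"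
    using TT_step[OF assms] Cons by auto
  then show ?case by (simp add: comp_def)
qed

lemma TT_cong: assumes "2 \<le> n" "TT n g" "\<And>q. q < n \<Longrightarrow> g q = h q" shows "TT n h"
proof -
  have a: "g 0 = h 0" "g (n - 1) = h (n - 1)" using assms by auto
  have b: "\<forall>q<n-1. g q = h q" using assms by auto
  have "TA n g = TA n h" unfolding TA_def using a assms(3) by auto
  moreover have "TB n g = TB n h" unfolding TB_def using a b by auto
  moreover have "TC n g = TC n h" unfolding TC_def using assms(3) by auto
  ultimately show ?thesis using assms(2) unfolding TT_def by blast
qed

lemma q3: "q < (3::nat) \<longleftrightarrow> q = 0 \<or> q = 1 \<or> q = 2" by auto
lemma q2: "q < (2::nat) \<longleftrightarrow> q = 0 \<or> q = 1" by auto

lemma W3: "W_delta 3 x q = (if x = 0 then (if q = 0 then 1 else if q = 1 then 2 else q)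
   else if x = 1 then (if q = 1 then 0 else q) else q)"
  by (simp add: W_delta_def)
lemma A3: "W_alpha 3 = {0,1,2}" by (simp add: W_alpha_def)
lemma W2: "W_delta 2 x q = (if x = 0 then (if q = 0 then 1 else q) else q)"
  by (simp add: W_delta_def)
lemma A2: "W_alpha 2 = {0,1}" by (simp add: W_alpha_def)

lemma word3: assumes "w \<in> lists {0,1,2}" "w \<noteq> []" "\<forall>q<3. delta_star (W_delta 3) q w = g q"
  shows "\<exists>w\<in>lists (W_alpha 3). w \<noteq> [] \<and> (\<forall>q<3. delta_star (W_delta 3) q w = g q)"
  using assms A3 by blast

lemma gen3: assumes "TT 3 g"
  shows "\<exists>w\<in>lists (W_alpha 3). w \<noteq> [] \<and> (\<forall>q<3. delta_star (W_delta 3) q w = g q)"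
proof -
  have g2: "g 2 = 2" using assms unfolding TT_def TA_def TB_def TC_def by auto
  have "(g 0 = 0 \<and> (g 1 = 0 \<or> g 1 = 1 \<or> g 1 = 2)) \<or> (g 0 = 1 \<and> (g 1 = 1 \<or> g 1 = 2)) \<or> (g 0 = 2 \<and> g 1 = 2)"
    using assms unfolding TT_def
  proof (elim disjE)
    assume "TA 3 g" then show ?thesis unfolding TA_def q3 by auto
  next
    assume "TB 3 g"
    then obtain j where "1 \<le> j" "j \<le> 1" "g 0 = j" "\<forall>q<2. g q = j \<or> g q = 2" unfolding TB_def by auto
    then show ?thesis unfolding q2 by auto
  next
    assume "TC 3 g" then show ?thesis unfolding TC_def q3 by auto
  qed
  then consider "g 0 = 0" "g 1 = 0" | "g 0 = 0" "g 1 = 1" | "g 0 = 0" "g 1 = 2" | "g 0 = 1" "g 1 = 1"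
    | "g 0 = 1" "g 1 = 2" | "g 0 = 2" "g 1 = 2" by (elim disjE conjE) metis+
  then show ?thesis
  proof cases
    case 1 then show ?thesis using g2 by (intro word3[of "[1]"]) (auto simp: q3 W3)
  next
    case 2 then show ?thesis using g2 by (intro word3[of "[2]"]) (auto simp: q3 W3)
  next
    case 3 then show ?thesis using g2 by (intro word3[of "[0,1]"]) (auto simp: q3 W3)
  next
    case 4 then show ?thesis using g2 by (intro word3[of "[1,0]"]) (auto simp: q3 W3)
  next
    case 5 then show ?thesis using g2 by (intro word3[of "[0]"]) (auto simp: q3 W3)
  next
    case 6 then show ?thesis using g2 by (intro word3[of "[0,0]"]) (auto simp: q3 W3)
  qed
qed

lemma gen2: assumes "TT 2 g"
  shows "\<exists>w\<in>lists (W_alpha 2). w \<noteq> [] \<and> (\<forall>q<2. delta_star (W_delta 2) q w = g q)"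
proof -
  have "TA 2 g \<or> TC 2 g" using assms unfolding TT_def TB_def by auto
  then show ?thesis
  proof
    assume "TA 2 g"
    then have "g 0 = 0" "g 1 = 1" unfolding TA_def by auto
    then show ?thesis by (intro bexI[of _ "[1]"]) (auto simp: q2 A2 W2)
  next
    assume "TC 2 g"
    then have "g 0 = 1" "g 1 = 1" unfolding TC_def by auto
    then show ?thesis by (intro bexI[of _ "[0]"]) (auto simp: q2 A2 W2)
  qed
qed

lemma gen: assumes "2 \<le> n" "TT n g"
  shows "\<exists>w\<in>lists (W_alpha n). w \<noteq> [] \<and> (\<forall>q<n. delta_star (W_delta n) q w = g q)"
proof (cases "4 \<le> n")
  case True then show ?thesis using realized_ne realized_TT assms by blast
next
  case False
  then have "n = 2 \<or> n = 3" using assms(1) by arith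
  then show ?thesis using gen2 gen3 assms by blast
qed




lemma nth_all: "(\<forall>q<length xs. P (xs ! q)) \<longleftrightarrow> (\<forall>x\<in>set xs. P x)"
  by (simp add: all_set_conv_all_nth)

lemma key: assumes n2: "2 \<le> n" and lz: "length zs = n - 2"
  shows "TT n (nth (a # zs @ [b])) \<longleftrightarrow>
     (a = 0 \<and> b = n - 1 \<and> set zs \<subseteq> {0..<n}) \<or>
     (1 \<le> a \<and> a \<le> n - 2 \<and> b = n - 1 \<and> set zs \<subseteq> {a, n - 1}) \<or>
     (a = n - 1 \<and> b = n - 1 \<and> set zs \<subseteq> {n - 1})"
proof -
  let ?xs = "a # zs @ [b]"
  have len: "length ?xs = n" using lz n2 by simp
  have x0: "?xs ! 0 = a" by simp
  have xn: "?xs ! (n - 1) = b"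
  proof -
    have "n - 1 = Suc (length zs)" using lz n2 by arith
    then show ?thesis by simp
  qed
  have all: "\<And>P. (\<forall>q<n. P (?xs ! q)) \<longleftrightarrow> P a \<and> (\<forall>z\<in>set zs. P z) \<and> P b"
    using nth_all[of ?xs] len by auto
  have all1: "\<And>P. (\<forall>q<n-1. P (?xs ! q)) \<longleftrightarrow> P a \<and> (\<forall>z\<in>set zs. P z)"
  proof -
    fix P
    have "\<forall>q<n-1. ?xs ! q = (a # zs) ! q"
    proof (intro allI impI)
      fix q assume "q < n - 1"
      then have "q < length (a # zs)" using lz n2 by simp
      then show "?xs ! q = (a # zs) ! q" using nth_append[of "a # zs" "[b]" q] by simp
    qed
    then have "(\<forall>q<n-1. P (?xs ! q)) \<longleftrightarrow> (\<forall>q<length (a # zs). P ((a # zs) ! q))"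
      using lz n2 by auto
    then show "(\<forall>q<n-1. P (?xs ! q)) \<longleftrightarrow> P a \<and> (\<forall>z\<in>set zs. P z)"
      by (simp only: nth_all) simp
  qed
  have A: "TA n (nth ?xs) \<longleftrightarrow> (a = 0 \<and> b = n - 1 \<and> set zs \<subseteq> {0..<n})"
    unfolding TA_def using x0 xn all[of "\<lambda>x. x < n"] n2 by auto
  have B: "TB n (nth ?xs) \<longleftrightarrow> (1 \<le> a \<and> a \<le> n - 2 \<and> b = n - 1 \<and> set zs \<subseteq> {a, n - 1})"
    unfolding TB_def using x0 xn all1[of "\<lambda>x. x = a \<or> x = n - 1"] by auto
  have C: "TC n (nth ?xs) \<longleftrightarrow> (a = n - 1 \<and> b = n - 1 \<and> set zs \<subseteq> {n - 1})"
    unfolding TC_def using all[of "\<lambda>x. x = n - 1"] by auto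
  show ?thesis unfolding TT_def A B C ..
qed

lemma decomp: assumes "length xs = n" "2 \<le> n"
  obtains a zs b where "xs = a # zs @ [b]" "length zs = n - 2"
proof -
  obtain a ys where xs: "xs = a # ys" using assms by (cases xs) auto
  then have "ys \<noteq> []" using assms by auto
  then obtain zs b where "ys = zs @ [b]" by (cases ys rule: rev_exhaust) auto
  then show ?thesis using that xs assms by auto
qed

definition TL :: "nat \<Rightarrow> nat list set" where
  "TL n = {xs. length xs = n \<and> TT n (nth xs)}"

definition LA where "LA n = (\<lambda>ys. 0 # ys @ [n-1]) ` {ys. set ys \<subseteq> {0..<n} \<and> length ys = n-2}"
definition LBj where "LBj n j = (\<lambda>ys. j # ys @ [n-1]) ` {ys. set ys \<subseteq> {j, n-1} \<and> length ys = n-2}"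
definition LC where "LC n = {(n - 1) # replicate (n - 2) (n - 1) @ [n - 1]}"

lemma TL_eq: assumes n2: "2 \<le> n" shows "TL n = LA n \<union> (\<Union>j\<in>{1..n-2}. LBj n j) \<union> LC n"
proof
  show "TL n \<subseteq> LA n \<union> (\<Union>j\<in>{1..n-2}. LBj n j) \<union> LC n"
  proof
    fix xs assume "xs \<in> TL n"
    then have l: "length xs = n" and t: "TT n (nth xs)" unfolding TL_def by auto
    obtain a zs b where xs: "xs = a # zs @ [b]" and lz: "length zs = n - 2" using decomp[OF l n2] .
    have "(a = 0 \<and> b = n - 1 \<and> set zs \<subseteq> {0..<n}) \<or>
     (1 \<le> a \<and> a \<le> n - 2 \<and> b = n - 1 \<and> set zs \<subseteq> {a, n - 1}) \<or>
     (a = n - 1 \<and> b = n - 1 \<and> set zs \<subseteq> {n - 1})" using key[OF n2 lz] t xs by simp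
    then show "xs \<in> LA n \<union> (\<Union>j\<in>{1..n-2}. LBj n j) \<union> LC n"
    proof (elim disjE)
      assume h: "a = 0 \<and> b = n - 1 \<and> set zs \<subseteq> {0..<n}"
      then show ?thesis unfolding LA_def using xs lz by auto
    next
      assume h: "1 \<le> a \<and> a \<le> n - 2 \<and> b = n - 1 \<and> set zs \<subseteq> {a, n - 1}"
      then have "xs \<in> LBj n a" unfolding LBj_def using xs lz by auto
      then show ?thesis using h by auto
    next
      assume h: "a = n - 1 \<and> b = n - 1 \<and> set zs \<subseteq> {n - 1}"
      then have "zs = replicate (n - 2) (n - 1)" using lz by (auto intro: replicate_eqI)
      then show ?thesis unfolding LC_def using xs h by auto
    qed
  qed
next
  show "LA n \<union> (\<Union>j\<in>{1..n-2}. LBj n j) \<union> LC n \<subseteq> TL n"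
  proof
    fix xs assume "xs \<in> LA n \<union> (\<Union>j\<in>{1..n-2}. LBj n j) \<union> LC n"
    then consider "xs \<in> LA n" | j where "j \<in> {1..n-2}" "xs \<in> LBj n j" | "xs \<in> LC n" by auto
    then show "xs \<in> TL n"
    proof cases
      case 1
      then obtain ys where ys: "xs = 0 # ys @ [n-1]" "set ys \<subseteq> {0..<n}" "length ys = n - 2"
        unfolding LA_def by auto
      then show ?thesis unfolding TL_def using key[OF n2 ys(3), of 0 "n-1"] n2 by simp
    next
      case 2
      then obtain ys where ys: "xs = j # ys @ [n-1]" "set ys \<subseteq> {j, n-1}" "length ys = n - 2"
        unfolding LBj_def by auto
      then show ?thesis unfolding TL_def using key[OF n2 ys(3), of j "n-1"] n2 2(1) by simp
    next
      case 3
      then have xs: "xs = (n - 1) # replicate (n - 2) (n - 1) @ [n - 1]" unfolding LC_def by auto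
      have "Suc (Suc (n - 2)) = n" using n2 by arith
      then show ?thesis unfolding TL_def using key[OF n2, of "replicate (n - 2) (n - 1)" "n - 1" "n - 1"] xs n2
        by (simp add: set_replicate_conv_if)
    qed
  qed
qed

lemma card_TL: assumes n2: "2 \<le> n" shows "card (TL n) = n ^ (n - 2) + (n - 2) * 2 ^ (n - 2) + 1"
proof -
  have finA: "finite {ys. set ys \<subseteq> {0..<n} \<and> length ys = n-2}" by (rule finite_lists_length_eq) simp
  have finB: "finite {ys. set ys \<subseteq> {j, n-1} \<and> length ys = n-2}" for j by (rule finite_lists_length_eq) simp
  have cA: "card (LA n) = n ^ (n - 2)"
  proof -
    have "card (LA n) = card {ys. set ys \<subseteq> {0..<n} \<and> length ys = n-2}"
      unfolding LA_def by (rule card_image) (auto simp: inj_on_def)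
    also have "\<dots> = n ^ (n - 2)" by (simp add: card_lists_length_eq)
    finally show ?thesis .
  qed
  have cBj: "card (LBj n j) = 2 ^ (n - 2)" if "j \<in> {1..n-2}" for j
  proof -
    have "card (LBj n j) = card {ys. set ys \<subseteq> {j, n-1} \<and> length ys = n-2}"
      unfolding LBj_def by (rule card_image) (auto simp: inj_on_def)
    also have "\<dots> = card {j, n - 1} ^ (n - 2)" by (simp add: card_lists_length_eq)
    also have "card {j, n - 1} = 2" using that n2 by auto
    finally show ?thesis .
  qed
  have finLB: "finite (LBj n j)" for j unfolding LBj_def using finB by simp
  have cB: "card (\<Union>j\<in>{1..n-2}. LBj n j) = (n - 2) * 2 ^ (n - 2)"
  proof -
    have "card (\<Union>j\<in>{1..n-2}. LBj n j) = (\<Sum>j\<in>{1..n-2}. card (LBj n j))"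
      by (rule card_UN_disjoint) (simp, simp add: finLB, auto simp: LBj_def)
    also have "\<dots> = (\<Sum>j\<in>{1..n-2}. 2 ^ (n - 2))" using cBj by simp
    finally show ?thesis by simp
  qed
  have cC: "card (LC n) = 1" unfolding LC_def by simp
  have finLA: "finite (LA n)" unfolding LA_def using finA by simp
  have d1: "LA n \<inter> (\<Union>j\<in>{1..n-2}. LBj n j) = {}" unfolding LA_def LBj_def by auto
  have d2: "(LA n \<union> (\<Union>j\<in>{1..n-2}. LBj n j)) \<inter> LC n = {}"
    unfolding LA_def LBj_def LC_def using n2 by auto
  have "card (TL n) = card (LA n \<union> (\<Union>j\<in>{1..n-2}. LBj n j)) + card (LC n)"
    unfolding TL_eq[OF n2] by (rule card_Un_disjoint) (use finLA finLB d2 in \<open>auto simp: LC_def\<close>)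
  also have "card (LA n \<union> (\<Union>j\<in>{1..n-2}. LBj n j)) = card (LA n) + card (\<Union>j\<in>{1..n-2}. LBj n j)"
    by (rule card_Un_disjoint) (use finLA finLB d1 in auto)
  finally show ?thesis using cA cB cC by simp
qed




definition opt :: "nat \<Rightarrow> nat list \<Rightarrow> nat \<Rightarrow> nat option" where
  "opt n xs = (\<lambda>q. if q \<in> W_states n then Some (xs ! q) else None)"

lemma semigroup_eq: assumes n2: "2 \<le> n"
  shows "trans_semigroup (W_states n) (W_alpha n) (W_delta n) = opt n ` TL n"
proof
  show "trans_semigroup (W_states n) (W_alpha n) (W_delta n) \<subseteq> opt n ` TL n"
  proof
    fix f assume "f \<in> trans_semigroup (W_states n) (W_alpha n) (W_delta n)"
    then obtain w where w: "w \<in> lists (W_alpha n)" "w \<noteq> []"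
      and f: "f = (\<lambda>q. if q \<in> W_states n then Some (delta_star (W_delta n) q w) else None)"
      unfolding trans_semigroup_def words_def by blast
    define xs where "xs = map (\<lambda>q. delta_star (W_delta n) q w) [0..<n]"
    have nx: "\<And>q. q < n \<Longrightarrow> xs ! q = delta_star (W_delta n) q w" unfolding xs_def by simp
    have "TT n (nth xs)"
      by (rule TT_cong[OF n2 TT_words[OF n2 w(1)]]) (simp add: nx)
    then have "xs \<in> TL n" unfolding TL_def xs_def by simp
    moreover have "f = opt n xs" unfolding f opt_def W_states_def using nx by auto
    ultimately show "f \<in> opt n ` TL n" by blast
  qed
next
  show "opt n ` TL n \<subseteq> trans_semigroup (W_states n) (W_alpha n) (W_delta n)"
  proof
    fix f assume "f \<in> opt n ` TL n"
    then obtain xs where xs: "xs \<in> TL n" "f = opt n xs" by blast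
    then have "TT n (nth xs)" unfolding TL_def by auto
    then obtain w where w: "w \<in> lists (W_alpha n)" "w \<noteq> []" "\<forall>q<n. delta_star (W_delta n) q w = xs ! q"
      using gen[OF n2] by blast
    have "f = (\<lambda>q. if q \<in> W_states n then Some (delta_star (W_delta n) q w) else None)"
      unfolding xs(2) opt_def W_states_def using w(3) by auto
    then show "f \<in> trans_semigroup (W_states n) (W_alpha n) (W_delta n)"
      unfolding trans_semigroup_def words_def using w(1,2) by blast
  qed
qed

lemma card_semigroup: assumes n2: "2 \<le> n"
  shows "card (trans_semigroup (W_states n) (W_alpha n) (W_delta n)) = n ^ (n - 2) + (n - 2) * 2 ^ (n - 2) + 1"
proof -
  have "inj_on (opt n) (TL n)"
  proof (rule inj_onI)
    fix xs ys assume "xs \<in> TL n" "ys \<in> TL n" "opt n xs = opt n ys"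
    then have l: "length xs = n" "length ys = n" and e: "\<And>q. opt n xs q = opt n ys q"
      unfolding TL_def by auto
    show "xs = ys"
    proof (rule nth_equalityI)
      show "length xs = length ys" using l by simp
      fix q assume "q < length xs"
      then show "xs ! q = ys ! q" using e[of q] l unfolding opt_def W_states_def by auto
    qed
  qed
  then show ?thesis using semigroup_eq[OF n2] card_TL[OF n2] card_image by metis
qed

lemma minimal: assumes n2: "2 \<le> n"
  shows "dfa_minimal (W_states n) (W_alpha n) (W_delta n) 0 {n - 1}"
  unfolding dfa_minimal_def words_def
proof (intro conjI ballI impI)
  fix q assume q: "q \<in> W_states n"
  then have ql: "q < n" unfolding W_states_def by auto
  have "TT n (\<lambda>p. if p < n - 1 then q else n - 1)"
    by (rule TT_const[OF n2, of _ q]) (use ql n2 in auto)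
  then obtain w where "w \<in> lists (W_alpha n)" "\<forall>p<n. delta_star (W_delta n) p w = (if p < n - 1 then q else n - 1)"
    using gen[OF n2] by blast
  then show "\<exists>w\<in>lists (W_alpha n). delta_star (W_delta n) 0 w = q" using n2 by (intro bexI[of _ w]) auto
next
  fix p q assume p: "p \<in> W_states n" and q: "q \<in> W_states n" and pq: "p \<noteq> q"
  have pl: "p < n" and ql: "q < n" using p q unfolding W_states_def by auto
  show "\<exists>w\<in>lists (W_alpha n). (delta_star (W_delta n) p w \<in> {n - 1}) \<noteq> (delta_star (W_delta n) q w \<in> {n - 1})"
  proof (cases "p = n - 1 \<or> q = n - 1")
    case True
    then show ?thesis using pq by (intro bexI[of _ "[]"]) auto
  next
    case False
    define r where "r = (if p = 0 then q else p)"
    define s where "s = (if p = 0 then p else q)"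
    have rs: "r \<noteq> 0" "r < n - 1" "s < n - 1" "r \<noteq> s" "{r, s} = {p, q}"
      using pq pl ql False unfolding r_def s_def by auto
    have "TT n (\<lambda>x. if x = r then n - 1 else x)"
      unfolding TT_def TA_def using rs n2 by auto
    then obtain w where w: "w \<in> lists (W_alpha n)" "\<forall>x<n. delta_star (W_delta n) x w = (if x = r then n - 1 else x)"
      using gen[OF n2] by blast
    have "delta_star (W_delta n) r w = n - 1" "delta_star (W_delta n) s w = s"
      using w(2) rs by auto
    then have "(delta_star (W_delta n) p w \<in> {n - 1}) \<noteq> (delta_star (W_delta n) q w \<in> {n - 1})"
      using rs by (auto simp: doubleton_eq_iff)
    then show ?thesis using w(1) by blast
  qed
qed

lemma ideal: assumes n2: "2 \<le> n"
  shows "two_sided_ideal (W_alpha n) (dfa_lang (W_alpha n) (W_delta n) 0 {n - 1})"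
proof -
  let ?L = "dfa_lang (W_alpha n) (W_delta n) 0 {n - 1}"
  have fix_last: "delta_star (W_delta n) (n - 1) x = n - 1" if "x \<in> lists (W_alpha n)" for x
    using TT_props(1)[OF n2 TT_words[OF n2 that]] .
  have sink: "delta_star (W_delta n) p v = n - 1"
    if "v \<in> lists (W_alpha n)" "delta_star (W_delta n) 0 v = n - 1" "p < n" for v p
  proof -
    have t: "TT n (\<lambda>q. delta_star (W_delta n) q v)" using TT_words[OF n2 that(1)] .
    have "\<not> TA n (\<lambda>q. delta_star (W_delta n) q v)" using that(2) n2 unfolding TA_def by auto
    moreover have "\<not> TB n (\<lambda>q. delta_star (W_delta n) q v)" using that(2) n2 unfolding TB_def by auto
    ultimately have "TC n (\<lambda>q. delta_star (W_delta n) q v)" using t unfolding TT_def by blast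
    then show ?thesis using that(3) unfolding TC_def by auto
  qed
  have ne: "?L \<noteq> {}"
  proof -
    have "TT n (\<lambda>q. n - 1)" unfolding TT_def TC_def by auto
    then obtain w where "w \<in> lists (W_alpha n)" "\<forall>q<n. delta_star (W_delta n) q w = n - 1"
      using gen[OF n2] by blast
    then have "w \<in> ?L" unfolding dfa_lang_def words_def using n2 by auto
    then show ?thesis by blast
  qed
  have sub: "?L \<subseteq> words (W_alpha n)" unfolding dfa_lang_def by auto
  have eq: "?L = {u @ v @ x | u v x. u \<in> words (W_alpha n) \<and> v \<in> ?L \<and> x \<in> words (W_alpha n)}"
  proof
    show "?L \<subseteq> {u @ v @ x | u v x. u \<in> words (W_alpha n) \<and> v \<in> ?L \<and> x \<in> words (W_alpha n)}"
    proof
      fix w assume "w \<in> ?L"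
      then show "w \<in> {u @ v @ x | u v x. u \<in> words (W_alpha n) \<and> v \<in> ?L \<and> x \<in> words (W_alpha n)}"
        unfolding words_def by (intro CollectI exI[of _ "[]"] exI[of _ w]) auto
    qed
  next
    show "{u @ v @ x | u v x. u \<in> words (W_alpha n) \<and> v \<in> ?L \<and> x \<in> words (W_alpha n)} \<subseteq> ?L"
    proof
      fix w assume "w \<in> {u @ v @ x | u v x. u \<in> words (W_alpha n) \<and> v \<in> ?L \<and> x \<in> words (W_alpha n)}"
      then obtain u v x where w: "w = u @ v @ x" and u: "u \<in> lists (W_alpha n)" and x: "x \<in> lists (W_alpha n)"
        and v: "v \<in> lists (W_alpha n)" "delta_star (W_delta n) 0 v = n - 1"
        unfolding dfa_lang_def words_def by auto
      have p: "delta_star (W_delta n) 0 u < n" using ds_lt n2 by simp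
      have "delta_star (W_delta n) 0 w = n - 1"
        unfolding w ds_append using sink[OF v p] fix_last[OF x] by simp
      then show "w \<in> ?L" unfolding dfa_lang_def words_def using w u v x by auto
    qed
  qed
  show ?thesis unfolding two_sided_ideal_def using ne sub eq by blast
qed

theorem lemma6:
  fixes n :: nat
  assumes "n \<ge> 2"
  shows "dfa_minimal (W_states n) (W_alpha n) (W_delta n) 0 {n - 1}
       \<and> two_sided_ideal (W_alpha n) (dfa_lang (W_alpha n) (W_delta n) 0 {n - 1})
       \<and> card (trans_semigroup (W_states n) (W_alpha n) (W_delta n))
           = n ^ (n - 2) + (n - 2) * 2 ^ (n - 2) + 1"
  using minimal[OF assms] ideal[OF assms] card_semigroup[OF assms] by blast


end
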